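(* Let $\ell$ be a prime and $n$ a positive integer. Suppose that $\mathcal{O}$ is an imaginary quadratic order of conductor coprime to $\ell$ in which $\ell$ splits into two distinct prime ideals whose classes have order $n$ in $\mathrm{Cl}(\mathcal{O})$. Then the discriminant $D(\mathcal{O})$ of $\mathcal{O}$ satisfies $|D(\mathcal{O})|\le 4\ell^n-1$.
   Context: $\mathrm{Cl}(\mathcal{O})$ denotes the class group (of invertible ideals) of the order $\mathcal{O}$. *)

theory Defs
  imports Complex_Main "HOL-Computational_Algebra.Primes"
begin

text \<open>D is the discriminant of an imaginary quadratic order iff D < 0 and D = 0 or 1 mod 4.
  Every imaginary quadratic order is (up to the embedding into the complex numbers)
  the order Z[tau] with tau = (D + sqrt D)/2 for a unique such D, which is its discriminant.\<close>

definition imag_quad_disc :: "int \<Rightarrow> bool" where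
  "imag_quad_disc D \<longleftrightarrow> D < 0 \<and> (D mod 4 = 0 \<or> D mod 4 = 1)"

definition quad_tau :: "int \<Rightarrow> complex" where
  "quad_tau D = (of_int D + \<i> * complex_of_real (sqrt (real_of_int (- D)))) / 2"

definition quad_order :: "int \<Rightarrow> complex set" where
  "quad_order D = {of_int a + of_int b * quad_tau D | a b :: int. True}"

text \<open>Conductor: D = f^2 d_K with d_K the fundamental discriminant, i.e. f is the largest
  positive integer with f^2 dividing D and D / f^2 again a discriminant (0 or 1 mod 4).\<close>

definition conductor :: "int \<Rightarrow> int" where
  "conductor D = (GREATEST f. f > 0 \<and> f^2 dvd D \<and> ((D div f^2) mod 4 = 0 \<or> (D div f^2) mod 4 = 1))"

inductive_set add_span :: "complex set \<Rightarrow> complex set" for S where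
  zero: "0 \<in> add_span S"
| base: "x \<in> S \<Longrightarrow> x \<in> add_span S"
| add: "x \<in> add_span S \<Longrightarrow> y \<in> add_span S \<Longrightarrow> x + y \<in> add_span S"
| neg: "x \<in> add_span S \<Longrightarrow> - x \<in> add_span S"

definition ideal_prod :: "complex set \<Rightarrow> complex set \<Rightarrow> complex set" where
  "ideal_prod A B = add_span {a * b | a b. a \<in> A \<and> b \<in> B}"

primrec ideal_pow :: "complex set \<Rightarrow> complex set \<Rightarrow> nat \<Rightarrow> complex set" where
  "ideal_pow R I 0 = R"
| "ideal_pow R I (Suc k) = ideal_prod (ideal_pow R I k) I"

definition principal :: "complex set \<Rightarrow> complex \<Rightarrow> complex set" where
  "principal R \<alpha> = (\<lambda>x. \<alpha> * x) ` R"

definition is_principal :: "complex set \<Rightarrow> complex set \<Rightarrow> bool" where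
  "is_principal R I \<longleftrightarrow> (\<exists>\<alpha>. \<alpha> \<noteq> 0 \<and> I = principal R \<alpha>)"

definition O_submodule :: "complex set \<Rightarrow> complex set \<Rightarrow> bool" where
  "O_submodule R M \<longleftrightarrow> 0 \<in> M \<and> (\<forall>x\<in>M. \<forall>y\<in>M. x + y \<in> M) \<and> (\<forall>x\<in>M. - x \<in> M)
     \<and> (\<forall>r\<in>R. \<forall>x\<in>M. r * x \<in> M)"

definition int_ideal :: "complex set \<Rightarrow> complex set \<Rightarrow> bool" where
  "int_ideal R I \<longleftrightarrow> O_submodule R I \<and> I \<subseteq> R \<and> I \<noteq> {0}"

definition frac_ideal :: "complex set \<Rightarrow> complex set \<Rightarrow> bool" where
  "frac_ideal R M \<longleftrightarrow> O_submodule R M \<and> M \<noteq> {0}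
     \<and> (\<exists>d\<in>R. d \<noteq> 0 \<and> (\<lambda>x. d * x) ` M \<subseteq> R)"

definition invertible_ideal :: "complex set \<Rightarrow> complex set \<Rightarrow> bool" where
  "invertible_ideal R M \<longleftrightarrow> frac_ideal R M \<and> (\<exists>N. frac_ideal R N \<and> ideal_prod M N = R)"

definition prime_ideal :: "complex set \<Rightarrow> complex set \<Rightarrow> bool" where
  "prime_ideal R P \<longleftrightarrow> int_ideal R P \<and> P \<noteq> R
     \<and> (\<forall>x\<in>R. \<forall>y\<in>R. x * y \<in> P \<longrightarrow> x \<in> P \<or> y \<in> P)"

text \<open>The class of the invertible ideal I has order n in Cl(R) (invertible ideals modulo
  principal ideals): n is the least positive exponent with I^n principal.\<close>
definition class_order :: "complex set \<Rightarrow> complex set \<Rightarrow> nat \<Rightarrow> bool" where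
  "class_order R I n \<longleftrightarrow> invertible_ideal R I \<and> n > 0 \<and> is_principal R (ideal_pow R I n)
     \<and> (\<forall>m. 0 < m \<and> m < n \<longrightarrow> \<not> is_principal R (ideal_pow R I m))"

end

theory Submission
  imports Defs
begin

lemma quad_tau_Re: "Re (quad_tau D) = real_of_int D / 2"
  by (simp add: quad_tau_def)
lemma quad_tau_Im: "Im (quad_tau D) = sqrt (real_of_int (- D)) / 2"
  by (simp add: quad_tau_def)

definition cst :: "int \<Rightarrow> int" where "cst D = (D^2 - D) div 4"

lemma cst4: assumes "imag_quad_disc D" shows "4 * cst D = D^2 - D"
proof -
  have "(D^2 - D) mod 4 = 0" using assms unfolding imag_quad_disc_def
  proof -
    assume h: "D < 0 \<and> (D mod 4 = 0 \<or> D mod 4 = 1)"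
    have "D^2 - D = D * (D - 1)" by (simp add: power2_eq_square algebra_simps)
    moreover have "(D * (D - 1)) mod 4 = ((D mod 4) * ((D - 1) mod 4)) mod 4"
      by (simp add: mod_mult_eq)
    moreover have "(D - 1) mod 4 = ((D mod 4) - 1) mod 4" by (simp add: mod_diff_left_eq)
    ultimately show ?thesis using h by auto
  qed
  then show ?thesis unfolding cst_def by auto
qed

lemma tau_sq: assumes "imag_quad_disc D"
  shows "quad_tau D ^ 2 = of_int D * quad_tau D - of_int (cst D)"
proof -
  have D: "D < 0" using assms by (simp add: imag_quad_disc_def)
  have s: "sqrt (real_of_int (- D)) ^ 2 = - real_of_int D" using D by simp
  have c: "real_of_int (cst D) = (real_of_int D ^ 2 - real_of_int D) / 4"
    using cst4[OF assms] by (metis (mono_tags) of_int_diff of_int_eq_iff of_int_mult of_int_numeral of_int_power nonzero_mult_div_cancel_left zero_neq_numeral)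
  show ?thesis
    by (simp add: complex_eq_iff quad_tau_Re quad_tau_Im power2_eq_square c field_simps)
       (use s in \<open>simp add: power2_eq_square algebra_simps\<close>)
qed

lemma O_iff: "z \<in> quad_order D \<longleftrightarrow> (\<exists>a b. z = of_int a + of_int b * quad_tau D)"
  by (auto simp: quad_order_def)

lemma O_int: "of_int k \<in> quad_order D"
  unfolding O_iff by (rule exI[of _ k], rule exI[of _ 0]) simp
lemma O_nat: "of_nat k \<in> quad_order D"
  using O_int[of "int k" D] by simp
lemma O_one: "1 \<in> quad_order D" using O_int[of 1 D] by simp
lemma O_zero: "0 \<in> quad_order D" using O_int[of 0 D] by simp
lemma O_add: "x \<in> quad_order D \<Longrightarrow> y \<in> quad_order D \<Longrightarrow> x + y \<in> quad_order D"
  unfolding O_iff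
  by (auto, rule_tac x="a+aa" in exI, rule_tac x="b+ba" in exI, simp add: algebra_simps)
lemma O_neg: "x \<in> quad_order D \<Longrightarrow> - x \<in> quad_order D"
  unfolding O_iff
  by (auto, rule_tac x="-a" in exI, rule_tac x="-b" in exI, simp add: algebra_simps)
lemma O_diff: "x \<in> quad_order D \<Longrightarrow> y \<in> quad_order D \<Longrightarrow> x - y \<in> quad_order D"
  using O_add[of x D "-y"] O_neg[of y D] by simp
lemma O_mult: assumes "imag_quad_disc D" "x \<in> quad_order D" "y \<in> quad_order D"
  shows "x * y \<in> quad_order D"
proof -
  obtain a b c d where x: "x = of_int a + of_int b * quad_tau D" and y: "y = of_int c + of_int d * quad_tau D"
    using assms(2,3) unfolding O_iff by blast
  have "x * y = of_int a * of_int c + (of_int a * of_int d + of_int b * of_int c) * quad_tau D + of_int b * of_int d * quad_tau D ^ 2"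
    unfolding x y by (simp add: algebra_simps power2_eq_square)
  also have "\<dots> = of_int (a*c - b*d*cst D) + of_int (a*d + b*c + b*d*D) * quad_tau D"
    unfolding tau_sq[OF assms(1)] by (simp add: algebra_simps)
  finally show ?thesis unfolding O_iff by blast
qed
lemma O_pow: assumes "imag_quad_disc D" "x \<in> quad_order D" shows "x ^ k \<in> quad_order D"
  by (induction k) (auto simp: O_one O_mult[OF assms(1)] assms(2))

lemma O_sub: "O_submodule (quad_order D) M \<Longrightarrow> r \<in> quad_order D \<Longrightarrow> x \<in> M \<Longrightarrow> r * x \<in> M"
  by (simp add: O_submodule_def)

lemma add_span_sub:
  assumes "S \<subseteq> M" "0 \<in> M" "\<And>x y. x \<in> M \<Longrightarrow> y \<in> M \<Longrightarrow> x + y \<in> M" "\<And>x. x \<in> M \<Longrightarrow> - x \<in> M"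
  shows "add_span S \<subseteq> M"
proof
  fix x assume "x \<in> add_span S" then show "x \<in> M"
    by (induction rule: add_span.induct) (use assms in auto)
qed

lemma ideal_prod_mem: "a \<in> A \<Longrightarrow> b \<in> B \<Longrightarrow> a * b \<in> ideal_prod A B"
  unfolding ideal_prod_def by (rule add_span.base) blast

lemma ideal_prod_comm: "ideal_prod A B = ideal_prod B A"
proof -
  have "{a * b |a b. a \<in> A \<and> b \<in> B} = {a * b |a b. a \<in> B \<and> b \<in> A}"
    by (auto, metis mult.commute, metis mult.commute)
  then show ?thesis by (simp add: ideal_prod_def)
qed

lemma ideal_prod_sub_right:
  assumes "A \<subseteq> quad_order D" "O_submodule (quad_order D) B"
  shows "ideal_prod A B \<subseteq> B"
  unfolding ideal_prod_def
  apply (rule add_span_sub)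
  using assms by (auto simp: O_submodule_def)

lemma span_closed:
  "0 \<in> add_span S" "x \<in> add_span S \<Longrightarrow> y \<in> add_span S \<Longrightarrow> x + y \<in> add_span S"
  "x \<in> add_span S \<Longrightarrow> - x \<in> add_span S"
  by (auto intro: add_span.intros)

lemma prod_mult:
  assumes x: "x \<in> ideal_prod A B" and y: "y \<in> ideal_prod C E"
  shows "x * y \<in> ideal_prod (ideal_prod A C) (ideal_prod B E)"
proof -
  let ?T = "ideal_prod (ideal_prod A C) (ideal_prod B E)"
  have T0: "0 \<in> ?T" and Tadd: "\<And>u v. u \<in> ?T \<Longrightarrow> v \<in> ?T \<Longrightarrow> u + v \<in> ?T"
    and Tneg: "\<And>u. u \<in> ?T \<Longrightarrow> - u \<in> ?T"
    unfolding ideal_prod_def[of "ideal_prod A C"] by (auto intro: add_span.intros)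
  have gen: "a * b * y \<in> ?T" if a: "a \<in> A" and b: "b \<in> B" for a b
    using y unfolding ideal_prod_def[of C E]
  proof (induction rule: add_span.induct)
    case zero then show ?case using T0 by simp
  next
    case (base z)
    then obtain c e where z: "z = c * e" "c \<in> C" "e \<in> E" by blast
    have eq: "a * b * z = (a * c) * (b * e)" using z by (simp add: algebra_simps)
    show ?case unfolding eq using ideal_prod_mem[of "a*c" "ideal_prod A C" "b*e" "ideal_prod B E"]
      ideal_prod_mem[of a A c C] ideal_prod_mem[of b B e E] a b z by blast
  next
    case (add u v) then show ?case using Tadd[of "a*b*u" "a*b*v"] by (simp add: algebra_simps)
  next
    case (neg u) then show ?case using Tneg[of "a*b*u"] by simp
  qed
  show ?thesis using x unfolding ideal_prod_def[of A B]
  proof (induction rule: add_span.induct)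
    case zero then show ?case using T0 by simp
  next
    case (base z) then show ?case using gen by blast
  next
    case (add u v) then show ?case using Tadd by (simp add: algebra_simps)
  next
    case (neg u) then show ?case using Tneg by simp
  qed
qed

lemma pow_sub:
  assumes "int_ideal (quad_order D) P"
  shows "ideal_pow (quad_order D) P k \<subseteq> quad_order D" "ideal_pow (quad_order D) P (Suc k) \<subseteq> P"
proof -
  have sm: "O_submodule (quad_order D) P" and PR: "P \<subseteq> quad_order D"
    using assms by (auto simp: int_ideal_def)
  show 1: "ideal_pow (quad_order D) P k \<subseteq> quad_order D"
  proof (induction k)
    case 0 then show ?case by simp
  next
    case (Suc k) then show ?case using ideal_prod_sub_right[OF Suc sm] PR by auto
  qed
  show "ideal_pow (quad_order D) P (Suc k) \<subseteq> P"
    using ideal_prod_sub_right[OF 1 sm] by simp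
qed

lemma pow_mem:
  assumes "x \<in> P" shows "x ^ k \<in> ideal_pow (quad_order D) P k"
proof (induction k)
  case 0 then show ?case by (simp add: O_one)
next
  case (Suc k) then show ?case using ideal_prod_mem[OF Suc assms] by (simp add: mult.commute)
qed

lemma prime_one: assumes "prime_ideal (quad_order D) P" shows "1 \<notin> P"
proof
  assume "1 \<in> P"
  moreover have "O_submodule (quad_order D) P" using assms by (simp add: prime_ideal_def int_ideal_def)
  ultimately have "quad_order D \<subseteq> P"
    using O_sub[of D P _ 1] by force
  then show False using assms by (auto simp: prime_ideal_def int_ideal_def)
qed

lemma prime_pow:
  assumes "imag_quad_disc D" "prime_ideal (quad_order D) P" "x \<in> quad_order D" "x ^ k \<in> P"
  shows "x \<in> P"
  using assms(4)
proof (induction k)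
  case 0 then show ?case using prime_one[OF assms(2)] by simp
next
  case (Suc k)
  have "x ^ k * x \<in> P" using Suc.prems by (simp add: mult.commute)
  then have "x ^ k \<in> P \<or> x \<in> P" using assms(2) O_pow[OF assms(1,3)] assms(3)
    unfolding prime_ideal_def by blast
  then show ?case using Suc.IH by blast
qed

lemma principal_iff: "y \<in> principal R a \<longleftrightarrow> (\<exists>x\<in>R. y = a * x)"
  by (auto simp: principal_def)

lemma prod_principal:
  assumes "imag_quad_disc D"
  shows "ideal_prod (principal (quad_order D) a) (principal (quad_order D) b) \<subseteq> principal (quad_order D) (a * b)"
  unfolding ideal_prod_def
proof (rule add_span_sub)
  show "{x * y |x y. x \<in> principal (quad_order D) a \<and> y \<in> principal (quad_order D) b} \<subseteq> principal (quad_order D) (a * b)"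
  proof
    fix z assume "z \<in> {x * y |x y. x \<in> principal (quad_order D) a \<and> y \<in> principal (quad_order D) b}"
    then obtain u v where "u \<in> quad_order D" "v \<in> quad_order D" "z = (a*u)*(b*v)"
      unfolding principal_iff by blast
    moreover have "(a*u)*(b*v) = (a*b)*(u*v)" by (simp add: algebra_simps)
    ultimately show "z \<in> principal (quad_order D) (a * b)"
      using O_mult[OF assms] unfolding principal_iff by metis
  qed
  show "0 \<in> principal (quad_order D) (a * b)" unfolding principal_iff using O_zero by (metis mult_zero_right)
  show "x + y \<in> principal (quad_order D) (a * b)" if hx: "x \<in> principal (quad_order D) (a * b)"
    "y \<in> principal (quad_order D) (a * b)" for x y
  proof -
    obtain u v where "u \<in> quad_order D" "v \<in> quad_order D" "x = a*b*u" "y = a*b*v"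
      using hx unfolding principal_iff by blast
    then show ?thesis unfolding principal_iff using O_add[of u D v] by (metis distrib_left)
  qed
  show "- x \<in> principal (quad_order D) (a * b)" if hx: "x \<in> principal (quad_order D) (a * b)" for x
  proof -
    obtain u where "u \<in> quad_order D" "x = a*b*u"
      using hx unfolding principal_iff by blast
    then show ?thesis unfolding principal_iff using O_neg[of u D] by (metis mult_minus_right)
  qed
qed

lemma l_pow_in:
  assumes "ideal_prod P Q = principal (quad_order D) (of_nat l)"
  shows "of_nat l ^ k \<in> ideal_prod (ideal_pow (quad_order D) P k) (ideal_pow (quad_order D) Q k)"
proof (induction k)
  case 0 then show ?case using ideal_prod_mem[OF O_one O_one, of D D] by simp
next
  case (Suc k)
  have "of_nat l \<in> ideal_prod P Q" unfolding assms principal_iff using O_one by force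
  from prod_mult[OF Suc this] show ?case by (simp add: mult.commute)
qed

lemma sub_diff: "O_submodule R M \<Longrightarrow> x \<in> M \<Longrightarrow> y \<in> M \<Longrightarrow> x - y \<in> M"
  unfolding O_submodule_def by (metis diff_conv_add_uminus)

lemma maximal:
  assumes D: "imag_quad_disc D" and l: "prime l"
    and P: "prime_ideal (quad_order D) P" and Q: "prime_ideal (quad_order D) Q"
    and lP: "principal (quad_order D) (of_nat l) \<subseteq> P" and PQ: "P \<subseteq> Q"
  shows "Q \<subseteq> P"
proof
  fix x assume xQ: "x \<in> Q"
  show "x \<in> P"
  proof (rule ccontr)
    assume xP: "x \<notin> P"
    have QR: "Q \<subseteq> quad_order D" and Qs: "O_submodule (quad_order D) Q"
      using Q by (auto simp: prime_ideal_def int_ideal_def)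
    have Ps: "O_submodule (quad_order D) P" and PR: "P \<subseteq> quad_order D"
      using P by (auto simp: prime_ideal_def int_ideal_def)
    have xR: "x \<in> quad_order D" using xQ QR by auto
    have ex: "\<exists>p. x ^ k = of_int (fst p) + of_int (snd p) * quad_tau D" for k
      using O_pow[OF D xR, of k] unfolding O_iff by auto
    define f where "f k = (SOME p. x ^ k = of_int (fst p) + of_int (snd p) * quad_tau D)" for k
    have fs: "x ^ k = of_int (fst (f k)) + of_int (snd (f k)) * quad_tau D" for k
      unfolding f_def using someI_ex[OF ex[of k]] .
    define g where "g k = (fst (f k) mod int l, snd (f k) mod int l)" for k
    have lpos: "int l > 0" using l prime_gt_0_nat by auto
    have "g ` UNIV \<subseteq> {0..<int l} \<times> {0..<int l}"
      using lpos by (auto simp: g_def)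
    then have "finite (g ` UNIV)" by (rule finite_subset) simp
    then have "\<not> inj g" using finite_imageD infinite_UNIV_nat by blast
    then obtain i j where ij: "i \<noteq> j" "g i = g j" unfolding inj_def by blast
    have "\<exists>i j. i < j \<and> g i = g j"
      using ij by (metis linorder_neqE_nat)
    then obtain i j where ij: "i < j" "g i = g j" by blast
    define m where "m = j - i"
    have m: "m > 0" "j = i + m" using ij by (auto simp: m_def)
    have d1: "int l dvd fst (f j) - fst (f i)" and d2: "int l dvd snd (f j) - snd (f i)"
      using ij(2) unfolding g_def by (auto simp: mod_eq_dvd_iff dvd_diff_commute)
    obtain c where c: "fst (f j) - fst (f i) = int l * c" using d1 by (auto elim: dvdE)
    obtain d where d: "snd (f j) - snd (f i) = int l * d" using d2 by (auto elim: dvdE)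
    have "x ^ j - x ^ i = of_int (fst (f j) - fst (f i)) + of_int (snd (f j) - snd (f i)) * quad_tau D"
      using fs[of i] fs[of j] by (simp add: algebra_simps)
    also have "\<dots> = of_nat l * (of_int c + of_int d * quad_tau D)"
      unfolding c d by (simp add: algebra_simps)
    finally have "x ^ j - x ^ i \<in> principal (quad_order D) (of_nat l)"
      unfolding principal_iff using O_iff[of "of_int c + of_int d * quad_tau D" D] by blast
    then have "x ^ j - x ^ i \<in> P" using lP by blast
    moreover have "x ^ j - x ^ i = x ^ i * (x ^ m - 1)" using m by (simp add: algebra_simps power_add)
    ultimately have "x ^ i * (x ^ m - 1) \<in> P" by simp
    moreover have "x ^ i \<in> quad_order D" "x ^ m - 1 \<in> quad_order D"
      using O_pow[OF D xR] O_diff O_one by auto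
    ultimately have "x ^ i \<in> P \<or> x ^ m - 1 \<in> P" using P unfolding prime_ideal_def by blast
    moreover have "x ^ i \<notin> P" using prime_pow[OF D P xR] xP by blast
    ultimately have h1: "x ^ m - 1 \<in> Q" using PQ by blast
    obtain m' where m': "m = Suc m'" using m by (cases m) auto
    have "x ^ m' * x \<in> Q" using O_sub[OF Qs O_pow[OF D xR] xQ] .
    then have h2: "x ^ m \<in> Q" unfolding m' by (simp add: mult.commute)
    have "x ^ m - (x ^ m - 1) \<in> Q" using sub_diff[OF Qs h2 h1] .
    then have "1 \<in> Q" by simp
    then show False using prime_one[OF Q] by simp
  qed
qed

lemma Re_O: "Re (of_int a + of_int b * quad_tau D) = of_int a + of_int b * of_int D / 2"
  by (simp add: quad_tau_Re)
lemma Im_O: "Im (of_int a + of_int b * quad_tau D) = of_int b * sqrt (of_int (- D)) / 2"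
  by (simp add: quad_tau_Im)

lemma norm_ge1:
  assumes D: "imag_quad_disc D" and z: "z \<in> quad_order D" "z \<noteq> 0"
  shows "cmod z \<ge> 1"
proof -
  obtain a b where zab: "z = of_int a + of_int b * quad_tau D" using z unfolding O_iff by blast
  have Dn: "D < 0" using D by (simp add: imag_quad_disc_def)
  have s: "sqrt (real_of_int (- D)) ^ 2 = - real_of_int D" using Dn by simp
  have c: "real_of_int (cst D) = (real_of_int D ^ 2 - real_of_int D) / 4"
    using cst4[OF D] by (metis (mono_tags) of_int_diff of_int_mult of_int_numeral of_int_power nonzero_mult_div_cancel_left zero_neq_numeral)
  have "cmod z ^ 2 = (of_int a + of_int b * of_int D / 2) ^ 2 + (of_int b * sqrt (of_int (- D)) / 2) ^ 2"
    unfolding cmod_power2 zab Re_O Im_O by simp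
  also have "\<dots> = (of_int a + of_int b * of_int D / 2) ^ 2 + of_int b ^ 2 * (sqrt (of_int (- D)))^2 / 4"
    by (simp add: power_mult_distrib power_divide)
  also have "\<dots> = real_of_int (a^2 + a*b*D + b^2 * cst D)"
    unfolding s by (simp add: c power2_eq_square field_simps)
  finally have eq: "cmod z ^ 2 = real_of_int (a^2 + a*b*D + b^2 * cst D)" .
  have "cmod z > 0" using z by simp
  then have "real_of_int (a^2 + a*b*D + b^2 * cst D) > 0" using eq by (metis zero_less_power)
  then have "a^2 + a*b*D + b^2 * cst D \<ge> 1" by linarith
  then have "cmod z ^ 2 \<ge> 1" using eq by (metis of_int_1_le_iff)
  then show ?thesis by (metis abs_norm_cancel one_le_power real_sqrt_ge_1_iff real_sqrt_abs)
qed

lemma key: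
  assumes D: "imag_quad_disc D" and l: "prime l" and n: "n > 0"
    and P: "prime_ideal (quad_order D) P" and Q: "prime_ideal (quad_order D) Q" and PQne: "P \<noteq> Q"
    and PQ: "ideal_prod P Q = principal (quad_order D) (of_nat l)"
    and al: "ideal_pow (quad_order D) P n = principal (quad_order D) \<alpha>" and a0: "\<alpha> \<noteq> 0"
    and na: "cmod \<alpha> ^ 2 \<le> real l ^ n" and big: "4 * int l ^ n \<le> - D"
  shows False
proof -
  let ?R = "quad_order D"
  have QR: "Q \<subseteq> ?R" and Qs: "O_submodule ?R Q" and Qi: "int_ideal ?R Q"
    using Q by (auto simp: prime_ideal_def int_ideal_def)
  have Ps: "O_submodule ?R P" and PR: "P \<subseteq> ?R" and Pi: "int_ideal ?R P"
    using P by (auto simp: prime_ideal_def int_ideal_def)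
  have lmem: "of_nat l \<in> principal ?R (of_nat l)" unfolding principal_iff using O_one by force
  have lQ: "of_nat l \<in> Q" using lmem ideal_prod_sub_right[OF PR Qs] PQ by blast
  have lP: "principal ?R (of_nat l) \<subseteq> P" using ideal_prod_sub_right[OF QR Ps] PQ ideal_prod_comm by metis
  then have lP': "of_nat l \<in> P" using lmem by blast
  obtain n' where n': "n = Suc n'" using n by (cases n) auto
  have aP: "\<alpha> \<in> ideal_pow ?R P n" unfolding al principal_iff using O_one by force
  then have aR: "\<alpha> \<in> ?R" using pow_sub(1)[OF Pi] by blast
  have aPP: "\<alpha> \<in> P" using aP pow_sub(2)[OF Pi, of n'] n' by blast
  obtain a b where ab: "\<alpha> = of_int a + of_int b * quad_tau D" using aR unfolding O_iff by blast
  have aQ: "\<alpha> \<in> Q"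
  proof (cases "b = 0")
    case True
    then have aa: "\<alpha> = of_int a" using ab by simp
    have "int l dvd a"
    proof (rule ccontr)
      assume "\<not> int l dvd a"
      then have "coprime (int l) a" using l by (intro prime_imp_coprime) auto
      then have "gcd (int l) a = 1" by simp
      then obtain u v where uv: "u * int l + v * a = 1" using bezout_int[of "int l" a]
        by metis
      have "of_int u * of_nat l \<in> P" "of_int v * \<alpha> \<in> P"
        using O_sub[OF Ps O_int lP'] O_sub[OF Ps O_int aPP] by auto
      then have "of_int u * of_nat l + of_int v * \<alpha> \<in> P"
        using Ps unfolding O_submodule_def by blast
      moreover have "of_int u * of_nat l + of_int v * \<alpha> = (1::complex)"
        unfolding aa using arg_cong[OF uv, of "of_int :: int \<Rightarrow> complex"] by simp
      ultimately show False using prime_one[OF P] by simp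
    qed
    then obtain k where "a = int l * k" by (auto elim: dvdE)
    then have "\<alpha> = of_int k * of_nat l" unfolding aa by simp
    then show ?thesis using O_sub[OF Qs O_int lQ] by simp
  next
    case False
    have Dn: "D < 0" using D by (simp add: imag_quad_disc_def)
    have s: "sqrt (- real_of_int D) ^ 2 = - real_of_int D" using Dn by simp
    define u where "u = Re \<alpha>"
    define v where "v = Im \<alpha>"
    have v2: "v ^ 2 = of_int b ^ 2 * (- real_of_int D) / 4"
      unfolding v_def ab Im_O by (simp add: power_mult_distrib power_divide s)
    have "b ^ 2 > 0" using False by simp
    then have "b ^ 2 \<ge> 1" by linarith
    then have b1: "real_of_int b ^ 2 \<ge> 1" by (metis of_int_1_le_iff of_int_power)
    have "real_of_int (4 * int l ^ n) \<le> real_of_int (- D)" using big by (simp only: of_int_le_iff)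
    then have bigr: "4 * real l ^ n \<le> - real_of_int D" by simp
    have "real_of_int b ^ 2 * (- real_of_int D) \<ge> 1 * (- real_of_int D)"
      by (rule mult_right_mono[OF b1]) (use Dn in simp)
    then have "v ^ 2 \<ge> - real_of_int D / 4" unfolding v2 by simp
    then have vL: "v ^ 2 \<ge> real l ^ n" using bigr by linarith
    have uv: "u ^ 2 + v ^ 2 \<le> real l ^ n" using na unfolding cmod_power2 u_def v_def .
    have "u ^ 2 \<le> 0" using uv vL by linarith
    then have u0: "u = 0" by simp
    have veq: "v ^ 2 = real l ^ n" using uv vL u0 by simp
    have "\<alpha> * \<alpha> = - (of_nat l ^ n)"
      by (simp add: complex_eq_iff u0[unfolded u_def] veq[unfolded v_def, symmetric] power2_eq_square)
    moreover have "of_nat l ^ n \<in> Q"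
      using O_sub[OF Qs O_pow[OF D O_nat[of l]] lQ, of n'] n' by (simp add: mult.commute)
    ultimately have "\<alpha> * \<alpha> \<in> Q" using Qs unfolding O_submodule_def by simp
    then show ?thesis using Q aR unfolding prime_ideal_def by blast
  qed
  have "P \<subseteq> Q"
  proof
    fix x assume xP: "x \<in> P"
    have "x ^ n \<in> principal ?R \<alpha>" using pow_mem[OF xP, of n D] al by simp
    then obtain y where "y \<in> ?R" "x ^ n = \<alpha> * y" unfolding principal_iff by blast
    then have "x ^ n \<in> Q" using O_sub[OF Qs _ aQ, of y] by (simp add: mult.commute)
    then show "x \<in> Q" using prime_pow[OF D Q] xP PR by blast
  qed
  moreover then have "Q \<subseteq> P" using maximal[OF D l P Q lP] by blast
  ultimately show False using PQne by blast
qed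


lemma sq_split:
  fixes x y L :: real
  assumes "x \<ge> 0" "y \<ge> 0" "x * y \<le> L"
  shows "x ^ 2 \<le> L \<or> y ^ 2 \<le> L"
proof (rule ccontr)
  assume "\<not> ?thesis"
  then have h: "x ^ 2 > L" "y ^ 2 > L" by auto
  have xy0: "x * y \<ge> 0" using assms by simp
  have L0: "L \<ge> 0" using xy0 assms(3) by linarith
  have g: "x ^ 2 * y ^ 2 > L * L"
    by (rule mult_strict_mono[OF h(1) h(2)]) (use h L0 in linarith)+
  have "(x * y) * (x * y) \<le> L * L" using mult_mono[OF assms(3) assms(3) L0 xy0] .
  then have "x ^ 2 * y ^ 2 \<le> L * L" by (simp add: power2_eq_square algebra_simps)
  then show False using g by simp
qed

theorem lemma5p2:
  fixes D :: int and l n :: nat and P Q :: "complex set"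
  assumes "prime l" and "n > 0"
    and "imag_quad_disc D"
    and "coprime (int l) (conductor D)"
    and "prime_ideal (quad_order D) P" and "prime_ideal (quad_order D) Q" and "P \<noteq> Q"
    and "ideal_prod P Q = principal (quad_order D) (of_nat l)"
    and "class_order (quad_order D) P n" and "class_order (quad_order D) Q n"
  shows "\<bar>D\<bar> \<le> 4 * int l ^ n - 1"
proof (rule ccontr)
  assume "\<not> ?thesis"
  moreover have "D < 0" using assms(3) by (simp add: imag_quad_disc_def)
  ultimately have big: "4 * int l ^ n \<le> - D" by simp
  let ?R = "quad_order D"
  obtain \<alpha> where a0: "\<alpha> \<noteq> 0" and al: "ideal_pow ?R P n = principal ?R \<alpha>"
    using assms(9) unfolding class_order_def is_principal_def by blast
  obtain \<beta> where b0: "\<beta> \<noteq> 0" and bl: "ideal_pow ?R Q n = principal ?R \<beta>"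
    using assms(10) unfolding class_order_def is_principal_def by blast
  have "of_nat l ^ n \<in> principal ?R (\<alpha> * \<beta>)"
    using l_pow_in[OF assms(8), of n] prod_principal[OF assms(3), of \<alpha> \<beta>] al bl by auto
  then obtain \<delta> where d: "\<delta> \<in> ?R" "of_nat l ^ n = \<alpha> * \<beta> * \<delta>" unfolding principal_iff by blast
  have lpos: "l > 0" using assms(1) prime_gt_0_nat by blast
  have "\<delta> \<noteq> 0" using d lpos by auto
  then have d1: "cmod \<delta> \<ge> 1" using norm_ge1[OF assms(3) d(1)] by blast
  have "real l ^ n = cmod (of_nat l ^ n :: complex)" by (simp add: norm_power)
  also have "\<dots> = cmod \<alpha> * cmod \<beta> * cmod \<delta>" unfolding d(2) by (simp add: norm_mult)
  finally have eqL: "real l ^ n = cmod \<alpha> * cmod \<beta> * cmod \<delta>" .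
  have "cmod \<alpha> * cmod \<beta> * 1 \<le> cmod \<alpha> * cmod \<beta> * cmod \<delta>"
    by (rule mult_left_mono[OF d1]) simp
  then have "cmod \<alpha> * cmod \<beta> \<le> real l ^ n" using eqL by simp
  then have "cmod \<alpha> ^ 2 \<le> real l ^ n \<or> cmod \<beta> ^ 2 \<le> real l ^ n"
    by (intro sq_split) auto
  then show False
  proof
    assume "cmod \<alpha> ^ 2 \<le> real l ^ n"
    then show False using key[OF assms(3,1,2,5,6,7,8) al a0 _ big] by blast
  next
    assume "cmod \<beta> ^ 2 \<le> real l ^ n"
    moreover have "ideal_prod Q P = principal ?R (of_nat l)" using assms(8) ideal_prod_comm by metis
    ultimately show False using key[OF assms(3,1,2,6,5) _ _ bl b0 _ big] assms(7) by blast
  qed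
qed

end
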